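(* With $\mathcal N=\mathbb N^*$, $\Omega=\{x,y\}$, $U$ and the operation $\odot$ as in the context, one has $$S_{\mathcal N}\odot U=S_\Omega,\qquad T_{\mathcal N}\odot U=T_\Omega.$$
   Context: Words and moulds: $\underline{\mathcal N}$, $\underline\Omega$ are the sets of finite words over $\mathcal N$, $\Omega$ (empty word $\emptyset$, length $r(\cdot)$); moulds are functions to $\mathbb Q$ with product $(M\times N)^{\underline n}=\sum_{\underline n=\underline a\underline b}M^{\underline a}N^{\underline b}$, unit $\mathbb 1$, $e^M=\sum_kM^{\times k}/k!$ ($M^\emptyset=0$), $\log M=\sum_{k\ge1}\frac{(-1)^{k-1}}k(M-\mathbb 1)^{\times k}$ ($M^\emptyset=1$). $S_{\mathcal N}^\emptyset=1$, $S_{\mathcal N}^{n_1\cdots n_r}=1/(n_r(n_r+n_{r-1})\cdots(n_r+\cdots+n_1))$, $T_{\mathcal N}=\log S_{\mathcal N}$. $I_x$ (resp. $I_y$) is $1$ on the one-letter word $x$ (resp. $y$) and $0$ elsewhere; $S_\Omega=e^{I_x}\times e^{I_y}$, i.e. $S_\Omega^{x^py^q}=\frac1{p!q!}$ and $S_\Omega$ vanishes on words not of the form $x^py^q$; $T_\Omega=\log S_\Omega$. $U\in\mathbb Q^{\underline\Omega}$: $U^x=1$, $U^{x^pyx^q}=\frac{(-1)^q}{p!q!}$ ($p,q\in\mathbb N$), $0$ otherwise. For $M\in\mathbb Q^{\underline{\mathcal N}}$, $(M\odot U)^\emptyset=M^\emptyset$ and for nonempty $\underline\omega$, $(M\odot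 U)^{\underline\omega}=\sum_{s\ge1}\sum_{\underline\omega=\underline\omega^1\cdots\underline\omega^s,\ \underline\omega^i\ne\emptyset}M^{r(\underline\omega^1)\cdots r(\underline\omega^s)}U^{\underline\omega^1}\cdots U^{\underline\omega^s}$. *)

theory Defs
  imports Complex_Main
begin

type_synonym 'a mould = "'a list \<Rightarrow> rat"

definition mone :: "'a mould" where
  "mone w = (if w = [] then 1 else 0)"

definition mmult :: "'a mould \<Rightarrow> 'a mould \<Rightarrow> 'a mould" where
  "mmult M N w = (\<Sum>k\<le>length w. M (take k w) * N (drop k w))"

primrec mpow :: "'a mould \<Rightarrow> nat \<Rightarrow> 'a mould" where
  "mpow M 0 = mone"
| "mpow M (Suc k) = mmult M (mpow M k)"

text \<open>Exponential, for moulds with M [] = 0: the series is finite on each word,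
  since terms with k > length w vanish.\<close>
definition mexp :: "'a mould \<Rightarrow> 'a mould" where
  "mexp M w = (\<Sum>k\<le>length w. mpow M k w / of_nat (fact k))"

text \<open>Logarithm, for moulds with M [] = 1: again terms with k > length w vanish.\<close>
definition mlog :: "'a mould \<Rightarrow> 'a mould" where
  "mlog M w = (\<Sum>k\<in>{1..length w}.
      (-1) ^ (k - 1) / of_nat k * mpow (\<lambda>u. M u - mone u) k w)"

text \<open>Alphabet N = positive naturals (letters are nat; only positive letters ever occur
  in the statement).  S_N^{n1...nr} = 1/(n_r (n_r+n_{r-1}) ... (n_r+...+n_1)).\<close>
definition S_N :: "nat mould" where
  "S_N w = 1 / of_nat (\<Prod>k<length w. sum_list (drop k w))"

definition T_N :: "nat mould" where
  "T_N = mlog S_N"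

datatype xy = X | Y

definition I_x :: "xy mould" where
  "I_x w = (if w = [X] then 1 else 0)"

definition I_y :: "xy mould" where
  "I_y w = (if w = [Y] then 1 else 0)"

definition S_Omega :: "xy mould" where
  "S_Omega = mmult (mexp I_x) (mexp I_y)"

definition T_Omega :: "xy mould" where
  "T_Omega = mlog S_Omega"

definition U :: "xy mould" where
  "U w = (if w = [X] then 1
          else if (\<exists>p q. w = replicate p X @ [Y] @ replicate q X)
          then (let p = (THE p. \<exists>q. w = replicate p X @ [Y] @ replicate q X);
                    q = (THE q. \<exists>p. w = replicate p X @ [Y] @ replicate q X)
                in (-1) ^ q / (of_nat (fact p) * of_nat (fact q)))
          else 0)"

definition odot :: "nat mould \<Rightarrow> 'a mould \<Rightarrow> 'a mould" where
  "odot M V w = (if w = [] then M []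
     else (\<Sum>ws\<in>{ws. concat ws = w \<and> (\<forall>u\<in>set ws. u \<noteq> [])}.
             M (map length ws) * prod_list (map V ws)))"

end

theory Submission
  imports Defs
begin


definition D :: "'a list \<Rightarrow> 'a list list set" where
  "D v = {ws. concat ws = v \<and> (\<forall>u\<in>set ws. u \<noteq> [])}"

definition G :: "nat mould \<Rightarrow> 'a mould \<Rightarrow> 'a mould" where
  "G M V v = (\<Sum>ws\<in>D v. M (map length ws) * prod_list (map V ws))"

lemma D_Nil: "D [] = {[]}"
  unfolding D_def by auto

lemma D_nonempty:
  assumes "w \<noteq> []"
  shows "D w = (\<Union>k\<in>{1..length w}. Cons (take k w) ` D (drop k w))"
proof
  show "D w \<subseteq> (\<Union>k\<in>{1..length w}. Cons (take k w) ` D (drop k w))"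
  proof
    fix ws assume "ws \<in> D w"
    hence c: "concat ws = w" and ne: "\<forall>u\<in>set ws. u \<noteq> []" by (auto simp: D_def)
    then obtain u ws' where ws: "ws = u # ws'" using assms by (cases ws) auto
    have "u \<noteq> []" using ne ws by auto
    moreover have "w = u @ concat ws'" using c ws by simp
    ultimately show "ws \<in> (\<Union>k\<in>{1..length w}. Cons (take k w) ` D (drop k w))"
      using ne ws by (auto simp: D_def Suc_le_eq intro!: bexI[of _ "length u"])
  qed
next
  show "(\<Union>k\<in>{1..length w}. Cons (take k w) ` D (drop k w)) \<subseteq> D w"
    by (auto simp: D_def)
qed

lemma finite_D: "finite (D w)"
proof (induction w rule: length_induct)
  case (1 w)
  show ?case
  proof (cases "w = []")
    case True then show ?thesis by (simp add: D_Nil)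
  next
    case False
    have "\<forall>k\<in>{1..length w}. finite (D (drop k w))"
      using 1 False by auto
    then show ?thesis using D_nonempty[OF False] by auto
  qed
qed

lemma odot_G: "odot M V = G M V"
  by (rule ext) (simp add: odot_def G_def D_def[symmetric] D_Nil)

lemma length_D: "ws \<in> D w \<Longrightarrow> length ws \<le> length w"
proof -
  assume "ws \<in> D w"
  hence c: "concat ws = w" and ne: "\<forall>u\<in>set ws. u \<noteq> []" by (auto simp: D_def)
  have "length ws \<le> length (concat ws)" using ne
  proof (induction ws)
    case (Cons a ws) then have "length a > 0" by auto
    moreover have "length ws \<le> length (concat ws)" using Cons by auto
    ultimately show ?case by (simp only: length_Cons concat.simps length_append)
  qed simp
  thus ?thesis using c by simp
qed

lemma G_expand:
  assumes "w \<noteq> []"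
  shows "G M V w = (\<Sum>k\<in>{1..length w}. \<Sum>ws\<in>D (drop k w).
            M (k # map length ws) * (V (take k w) * prod_list (map V ws)))"
proof -
  have "G M V w = (\<Sum>k\<in>{1..length w}. \<Sum>ws\<in>Cons (take k w) ` D (drop k w).
            M (map length ws) * prod_list (map V ws))"
    unfolding G_def D_nonempty[OF assms]
    by (rule sum.UNION_disjoint) (auto simp: finite_D, metis length_take min_absorb2)
  also have "\<dots> = (\<Sum>k\<in>{1..length w}. \<Sum>ws\<in>D (drop k w).
            M (k # map length ws) * (V (take k w) * prod_list (map V ws)))"
    by (rule sum.cong[OF refl], subst sum.reindex) (auto simp: min_def)
  finally show ?thesis .
qed



lemma G_mmult: "G (mmult M N) V w = mmult (G M V) (G N V) w"
proof -
  define h where "h = (\<lambda>(ws::'a list list, j::nat). M (map length (take j ws)) * N (map length (drop j ws))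
       * (prod_list (map V (take j ws)) * prod_list (map V (drop j ws))))"
  define g where "g = (\<lambda>(k::nat, (a::'a list list, b::'a list list)). M (map length a) * N (map length b)
       * (prod_list (map V a) * prod_list (map V b)))"
  define P where "P = Sigma (D w) (\<lambda>ws. {..length ws})"
  define Q where "Q = Sigma {..length w} (\<lambda>k. D (take k w) \<times> D (drop k w))"
  define \<phi> where "\<phi> = (\<lambda>(k::nat, (a::'a list list, b::'a list list)). (a @ b, length a))"
  have pl: "prod_list (map V ws) = prod_list (map V (take j ws)) * prod_list (map V (drop j ws))" for ws j
    by (metis append_take_drop_id map_append prod_list.append)
  have "G (mmult M N) V w = (\<Sum>ws\<in>D w. \<Sum>j\<le>length ws. h (ws, j))"
    unfolding G_def mmult_def h_def
    apply (intro sum.cong refl)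
    apply (simp add: sum_distrib_right take_map drop_map)
    apply (intro sum.cong refl)
    subgoal for x j by (subst pl[of x j]) (simp add: mult_ac)
    done
  also have "\<dots> = sum h P"
    unfolding P_def by (subst sum.Sigma) (auto simp: finite_D)
  also have "\<dots> = sum (\<lambda>x. h (\<phi> x)) Q"
  proof (rule sum.reindex_bij_betw[symmetric])
    define \<psi> where "\<psi> = (\<lambda>(ws::'a list list, j::nat). (length (concat (take j ws)), (take j ws, drop j ws)))"
    show "bij_betw \<phi> Q P"
    proof (rule bij_betw_byWitness[where f' = \<psi>])
      show "\<phi> ` Q \<subseteq> P"
        by (auto simp: \<phi>_def Q_def P_def D_def)
      show "\<psi> ` P \<subseteq> Q"
      proof
        fix y assume "y \<in> \<psi> ` P"
        then obtain ws j where x: "y = \<psi> (ws, j)" "ws \<in> D w" "j \<le> length ws" by (auto simp: P_def)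
        have c: "concat (take j ws) @ concat (drop j ws) = w"
          using x(2) by (auto simp: D_def simp flip: concat_append)
        show "y \<in> Q"
          using x(2) c[symmetric] unfolding x \<psi>_def Q_def D_def
          by (auto dest: in_set_takeD in_set_dropD)
      qed
      show "\<forall>x\<in>Q. \<psi> (\<phi> x) = x"
        by (auto simp: \<phi>_def \<psi>_def Q_def D_def)
      show "\<forall>y\<in>P. \<phi> (\<psi> y) = y"
        by (auto simp: \<phi>_def \<psi>_def P_def)
    qed
  qed
  also have "\<dots> = sum g Q"
    by (rule sum.cong) (auto simp: \<phi>_def g_def h_def Q_def)
  also have "\<dots> = (\<Sum>k\<le>length w. \<Sum>ab\<in>D (take k w) \<times> D (drop k w). g (k, ab))"
    unfolding Q_def by (subst sum.Sigma) (auto simp: finite_D)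
  also have "\<dots> = mmult (G M V) (G N V) w"
    unfolding mmult_def G_def g_def
    by (auto simp: sum_product sum.cartesian_product mult_ac intro!: sum.cong)
  finally show ?thesis .
qed



lemma G_mone: "G mone V w = mone w"
proof -
  have "G mone V w = (\<Sum>ws\<in>D w. if ws = [] then 1 else 0)"
    unfolding G_def mone_def by (auto intro!: sum.cong)
  also have "\<dots> = (if [] \<in> D w then 1 else 0)"
    by (simp add: finite_D)
  also have "\<dots> = mone w" by (auto simp: D_def mone_def)
  finally show ?thesis .
qed

lemma G_diff: "G (\<lambda>u. M u - N u) V w = G M V w - G N V w"
  unfolding G_def by (simp add: left_diff_distrib sum_subtractf)

lemma G_mpow: "G (mpow M k) V w = mpow (G M V) k w"
proof (induction k arbitrary: w)
  case 0 then show ?case by (simp add: G_mone)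
next
  case (Suc k)
  have "G (mpow M (Suc k)) V w = mmult (G M V) (G (mpow M k) V) w"
    by (simp add: G_mmult)
  also have "\<dots> = mpow (G M V) (Suc k) w"
    using Suc by (simp add: mmult_def)
  finally show ?case .
qed

lemma mpow_vanish: "A [] = 0 \<Longrightarrow> length v < k \<Longrightarrow> mpow A k v = 0"
proof (induction k arbitrary: v)
  case 0 then show ?case by simp
next
  case (Suc k)
  have "mpow A (Suc k) v = (\<Sum>j\<le>length v. A (take j v) * mpow A k (drop j v))"
    by (simp add: mmult_def)
  also have "\<dots> = 0"
  proof (rule sum.neutral, rule ballI)
    fix j assume "j \<in> {..length v}"
    show "A (take j v) * mpow A k (drop j v) = 0"
    proof (cases "j = 0")
      case True then show ?thesis using Suc.prems by simp
    next
      case False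
      have "length (drop j v) < k" using False Suc.prems \<open>j \<in> {..length v}\<close> by (simp only: length_drop atMost_iff)
      then show ?thesis using Suc.IH[of "drop j v"] Suc.prems by simp
    qed
  qed
  finally show ?case .
qed

lemma G_mlog:
  assumes "M [] = 1"
  shows "G (mlog M) V w = mlog (G M V) w"
proof -
  define A where "A = (\<lambda>u. M u - mone u)"
  define c where "c = (\<lambda>k::nat. (-1::rat) ^ (k - 1) / of_nat k)"
  have A0: "A [] = 0" using assms by (simp add: A_def mone_def)
  have "G (mlog M) V w = (\<Sum>ws\<in>D w. (\<Sum>k\<in>{1..length w}. c k * mpow A k (map length ws)) * prod_list (map V ws))"
    unfolding G_def
  proof (rule sum.cong[OF refl])
    fix ws assume ws: "ws \<in> D w"
    have "(\<Sum>k\<in>{1..length ws}. c k * mpow A k (map length ws)) = (\<Sum>k\<in>{1..length w}. c k * mpow A k (map length ws))"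
    proof (rule sum.mono_neutral_left)
      show "{1..length ws} \<subseteq> {1..length w}" using length_D[OF ws] by auto
      show "\<forall>i\<in>{1..length w} - {1..length ws}. c i * mpow A i (map length ws) = 0"
        using mpow_vanish[where A=A, OF A0] by auto
    qed simp
    then show "mlog M (map length ws) * prod_list (map V ws) = (\<Sum>k\<in>{1..length w}. c k * mpow A k (map length ws)) * prod_list (map V ws)"
      by (simp add: mlog_def A_def c_def)
  qed
  also have "\<dots> = (\<Sum>k\<in>{1..length w}. c k * G (mpow A k) V w)"
    unfolding G_def by (simp add: sum_distrib_right sum_distrib_left mult_ac sum.swap[of _ "D w"])
  also have "\<dots> = (\<Sum>k\<in>{1..length w}. c k * mpow (G A V) k w)"
    by (simp add: G_mpow)
  also have "G A V = (\<lambda>u. G M V u - mone u)"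
    by (rule ext) (simp add: A_def G_diff G_mone)
  finally show ?thesis unfolding mlog_def[of "G M V"] c_def by simp
qed



lemma S_N_Cons: "S_N (n # v) = S_N v / of_nat (n + sum_list v)"
proof -
  have "(\<Prod>k<length (n # v). sum_list (drop k (n # v))) = (n + sum_list v) * (\<Prod>k<length v. sum_list (drop k v))"
    by (simp only: length_Cons prod.lessThan_Suc_shift) simp
  then show ?thesis unfolding S_N_def by (simp add: field_simps)
qed

lemma G_SN_rec:
  assumes "w \<noteq> []"
  shows "of_nat (length w) * G S_N U w = (\<Sum>k\<in>{1..length w}. U (take k w) * G S_N U (drop k w))"
proof -
  have "G S_N U w = (\<Sum>k\<in>{1..length w}. \<Sum>ws\<in>D (drop k w).
            S_N (k # map length ws) * (U (take k w) * prod_list (map U ws)))"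
    by (rule G_expand[OF assms])
  also have "\<dots> = (\<Sum>k\<in>{1..length w}. \<Sum>ws\<in>D (drop k w).
            (U (take k w) * (S_N (map length ws) * prod_list (map U ws))) / of_nat (length w))"
  proof (intro sum.cong refl)
    fix k ws assume k: "k \<in> {1..length w}" and ws: "ws \<in> D (drop k w)"
    have "sum_list (map length ws) = length (drop k w)"
      using ws by (simp add: D_def length_concat[symmetric])
    hence "k + sum_list (map length ws) = length w" using k by simp
    then show "S_N (k # map length ws) * (U (take k w) * prod_list (map U ws)) =
          (U (take k w) * (S_N (map length ws) * prod_list (map U ws))) / of_nat (length w)"
      by (simp add: S_N_Cons)
  qed
  also have "\<dots> = (\<Sum>k\<in>{1..length w}. U (take k w) * G S_N U (drop k w)) / of_nat (length w)"
    by (simp add: G_def sum_divide_distrib sum_distrib_left)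
  finally show ?thesis using assms by simp
qed



lemma rep_iff: "(w = replicate k c) \<longleftrightarrow> (k = length w \<and> set w \<subseteq> {c})"
proof
  assume "w = replicate k c" then show "k = length w \<and> set w \<subseteq> {c}" by auto
next
  assume "k = length w \<and> set w \<subseteq> {c}"
  then show "w = replicate k c" by (induction w arbitrary: k) auto
qed

lemma mpow_single:
  assumes I: "\<And>u. I u = (if u = [c] then 1 else 0)"
  shows "mpow I k w = (if w = replicate k c then 1 else 0)"
proof (induction k arbitrary: w)
  case 0 then show ?case by (simp add: mone_def)
next
  case (Suc k)
  show ?case
  proof (cases w)
    case Nil then show ?thesis by (simp add: mmult_def I)
  next
    case (Cons a v)
    have "mpow I (Suc k) w = (\<Sum>j\<le>Suc (length v). I (take j w) * mpow I k (drop j w))"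
      by (simp add: mmult_def Cons)
    also have "\<dots> = I [] * mpow I k w + (\<Sum>j\<le>length v. I (a # take j v) * mpow I k (drop j v))"
      by (subst sum.atMost_Suc_shift) (simp add: Cons)
    also have "(\<Sum>j\<le>length v. I (a # take j v) * mpow I k (drop j v))
        = (\<Sum>j\<le>length v. if j = 0 then (if a = c then 1 else 0) * mpow I k v else 0)"
      by (rule sum.cong) (auto simp: I)
    also have "\<dots> = (if a = c then 1 else 0) * mpow I k v"
      by simp
    finally show ?thesis using Suc by (simp add: I Cons)
  qed
qed

lemma mexp_single:
  assumes I: "\<And>u. I u = (if u = [c] then 1 else 0)"
  shows "mexp I w = (if set w \<subseteq> {c} then 1 / fact (length w) else 0)"
proof -
  have "mexp I w = (\<Sum>k\<le>length w. if k = length w then (if set w \<subseteq> {c} then 1 else 0) / fact k else 0)"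
    unfolding mexp_def by (rule sum.cong) (auto simp: mpow_single[OF I] rep_iff)
  also have "\<dots> = (if set w \<subseteq> {c} then 1 / fact (length w) else 0)" by simp
  finally show ?thesis .
qed

lemma SO_sum: "S_Omega w = (\<Sum>k\<le>length w. if set (take k w) \<subseteq> {X} \<and> set (drop k w) \<subseteq> {Y}
     then 1 / (fact k * fact (length w - k)) else 0)"
  unfolding S_Omega_def mmult_def
  by (rule sum.cong) (auto simp: mexp_single[of _ X] mexp_single[of _ Y] I_x_def I_y_def min_def)

lemma SO_form: "S_Omega (replicate a X @ replicate b Y) = 1 / (fact a * fact b)"
proof -
  let ?w = "replicate a X @ replicate b Y"
  have "S_Omega ?w = (\<Sum>k\<le>length ?w. if k = a then 1 / (fact a * fact b) else 0)"
    unfolding SO_sum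
  proof (rule sum.cong[OF refl])
    fix k assume "k \<in> {..length ?w}"
    show "(if set (take k ?w) \<subseteq> {X} \<and> set (drop k ?w) \<subseteq> {Y} then 1 / (fact k * fact (length ?w - k)) else 0)
       = (if k = a then 1 / (fact a * fact b) else 0)"
    proof (cases "k = a")
      case True then show ?thesis by auto
    next
      case False
      have "\<not> (set (take k ?w) \<subseteq> {X} \<and> set (drop k ?w) \<subseteq> {Y})"
      proof (cases "k < a")
        case True
        then show ?thesis by auto
      next
        case False
        with \<open>k \<noteq> a\<close> \<open>k \<in> {..length ?w}\<close> show ?thesis by auto
      qed
      then show ?thesis using False by (simp only: if_not_P) simp
    qed
  qed
  also have "\<dots> = 1 / (fact a * fact b)" by simp
  finally show ?thesis .
qed

lemma SO_zero:
  assumes "X \<in> set v"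
  shows "S_Omega (u @ Y # v) = 0"
  unfolding SO_sum
proof (rule sum.neutral, rule ballI)
  fix k assume k: "k \<in> {..length (u @ Y # v)}"
  have "\<not> (set (take k (u @ Y # v)) \<subseteq> {X} \<and> set (drop k (u @ Y # v)) \<subseteq> {Y})"
  proof (cases "k \<le> length u")
    case True
    then have "X \<in> set (drop k (u @ Y # v))" using assms by auto
    then show ?thesis by auto
  next
    case False
    then have "take k (u @ Y # v) = u @ Y # take (k - length u - 1) v"
      by (simp add: take_Cons')
    then show ?thesis by auto
  qed
  then show "(if set (take k (u @ Y # v)) \<subseteq> {X} \<and> set (drop k (u @ Y # v)) \<subseteq> {Y}
     then 1 / (fact k * fact (length (u @ Y # v) - k)) else 0) = 0" by (rule if_not_P)
qed



lemma tw_rep: "takeWhile (\<lambda>c. c = X) (replicate p X @ Y # r) = replicate p X"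
  by (induction p) auto

lemma rep_Y_uniq:
  assumes "replicate p X @ Y # replicate q X = replicate p' X @ Y # replicate q' X"
  shows "p = p' \<and> q = q'"
proof -
  have "replicate p X = replicate p' X"
    using arg_cong[OF assms, of "takeWhile (\<lambda>c. c = X)"] by (simp only: tw_rep)
  hence pp: "p = p'" by (metis length_replicate)
  have "length (replicate p X @ Y # replicate q X) = length (replicate p' X @ Y # replicate q' X)"
    using assms by (rule arg_cong)
  hence "q = q'" using pp by simp
  with pp show ?thesis by simp
qed

lemma U1: "U (replicate k X) = (if k = 1 then 1 else 0)"
proof -
  have "\<not> (\<exists>p q. replicate k X = replicate p X @ [Y] @ replicate q X)"
  proof
    assume "\<exists>p q. replicate k X = replicate p X @ [Y] @ replicate q X"
    then obtain p q where "replicate k X = replicate p X @ [Y] @ replicate q X" by blast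
    then have "Y \<in> set (replicate k X)" by simp
    then show False by simp
  qed
  moreover have "replicate k X = [X] \<longleftrightarrow> k = 1"
    by (metis One_nat_def length_replicate list.size(3,4) replicate.simps(1,2))
  ultimately show ?thesis unfolding U_def by (simp only: if_not_P) auto
qed

lemma U2: "U (replicate p X @ Y # replicate q X) = (-1) ^ q / (fact p * fact q)"
proof -
  let ?w = "replicate p X @ Y # replicate q X"
  have ne: "?w \<noteq> [X]" by (cases p) auto
  have t1: "(THE p'. \<exists>q'. ?w = replicate p' X @ [Y] @ replicate q' X) = p"
    by (rule the_equality) (auto dest: rep_Y_uniq)
  have t2: "(THE q'. \<exists>p'. ?w = replicate p' X @ [Y] @ replicate q' X) = q"
    by (rule the_equality) (auto dest: rep_Y_uniq)
  have ex: "\<exists>p' q'. ?w = replicate p' X @ [Y] @ replicate q' X" by auto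
  show ?thesis unfolding U_def by (simp only: if_not_P[OF ne] if_P[OF ex] Let_def t1 t2) simp
qed

lemma U3: "U (replicate p X @ Y # replicate m X @ Y # s) = 0"
proof -
  let ?w = "replicate p X @ Y # replicate m X @ Y # s"
  have ne: "?w \<noteq> [X]" by (cases p) auto
  have "\<not> (\<exists>p' q'. ?w = replicate p' X @ [Y] @ replicate q' X)"
  proof
    assume "\<exists>p' q'. ?w = replicate p' X @ [Y] @ replicate q' X"
    then obtain p' q' where e: "?w = replicate p' X @ [Y] @ replicate q' X" by blast
    have "filter (\<lambda>c. c = Y) ?w = filter (\<lambda>c. c = Y) (replicate p' X @ [Y] @ replicate q' X)"
      using e by simp
    then show False by simp
  qed
  then show ?thesis unfolding U_def by (simp only: if_not_P[OF ne] if_not_P if_False)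
qed

lemma split_sum:
  "(\<Sum>k\<in>{1..length (a@b)}. f (take k (a@b)) (drop k (a@b))) =
   (\<Sum>k\<in>{1..length a}. f (take k a) (drop k a @ b)) + (\<Sum>k\<in>{1..length b}. f (a @ take k b) (drop k b))"
proof -
  have "(\<Sum>k\<in>{1..length a + length b}. f (take k (a@b)) (drop k (a@b))) =
     (\<Sum>k\<in>{1..length a}. f (take k (a@b)) (drop k (a@b))) + (\<Sum>k\<in>{length a + 1..length a + length b}. f (take k (a@b)) (drop k (a@b)))"
    by (rule sum.ub_add_nat) simp
  also have "(\<Sum>k\<in>{1..length a}. f (take k (a@b)) (drop k (a@b))) = (\<Sum>k\<in>{1..length a}. f (take k a) (drop k a @ b))"
    by (rule sum.cong) auto
  also have "(\<Sum>k\<in>{length a + 1..length a + length b}. f (take k (a@b)) (drop k (a@b)))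
      = (\<Sum>k\<in>{1..length b}. f (take (k + length a) (a@b)) (drop (k + length a) (a@b)))"
    using sum.shift_bounds_cl_nat_ivl[of "\<lambda>k. f (take k (a@b)) (drop k (a@b))" 1 "length a" "length b"]
    by (simp add: add.commute)
  also have "\<dots> = (\<Sum>k\<in>{1..length b}. f (a @ take k b) (drop k b))"
    by (rule sum.cong) auto
  finally show ?thesis by simp
qed

lemma split_sum0:
  fixes f :: "'a list \<Rightarrow> 'a list \<Rightarrow> 'b::comm_monoid_add"
  shows "(\<Sum>k\<in>{0..length (a@b)}. f (take k (a@b)) (drop k (a@b))) =
   (\<Sum>k\<in>{0..length a}. f (take k a) (drop k a @ b)) + (\<Sum>k\<in>{1..length b}. f (a @ take k b) (drop k b))"
proof -
  have e: "sum g {0..n} = g 0 + sum g {1..n}" for g :: "nat \<Rightarrow> 'b" and n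
    by (simp add: sum.atLeast_Suc_atMost)
  show ?thesis by (simp only: e split_sum) (simp add: add.assoc)
qed



abbreviation SO where "SO \<equiv> S_Omega"

lemma first_part:
  "(\<Sum>k\<in>{1..p}. U (take k (replicate p X)) * SO (drop k (replicate p X) @ b)) =
   (if p = 0 then 0 else SO (replicate (p - 1) X @ b))"
proof -
  have "(\<Sum>k\<in>{1..p}. U (take k (replicate p X)) * SO (drop k (replicate p X) @ b)) =
        (\<Sum>k\<in>{1..p}. if k = 1 then SO (replicate (p - 1) X @ b) else 0)"
    by (rule sum.cong) (auto simp: U1)
  also have "\<dots> = (if p = 0 then 0 else SO (replicate (p - 1) X @ b))"
    by simp
  finally show ?thesis .
qed

lemma L_form:
  assumes r': "r' = [] \<or> (\<exists>s. r' = Y # s)"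
  shows "(\<Sum>k\<in>{1..length (replicate p X @ Y # replicate m X @ r')}.
            U (take k (replicate p X @ Y # replicate m X @ r')) * SO (drop k (replicate p X @ Y # replicate m X @ r'))) =
         (if p = 0 then 0 else SO (replicate (p - 1) X @ Y # replicate m X @ r')) +
         (\<Sum>j\<in>{0..m}. (-1) ^ j / (fact p * fact j) * SO (replicate (m - j) X @ r'))"
proof -
  define r where "r = replicate m X @ r'"
  have 1: "(\<Sum>k\<in>{1..length (replicate p X @ Y # r)}. U (take k (replicate p X @ Y # r)) * SO (drop k (replicate p X @ Y # r)))
     = (\<Sum>k\<in>{1..p}. U (take k (replicate p X)) * SO (drop k (replicate p X) @ Y # r))
       + (\<Sum>k\<in>{1..Suc (length r)}. U (replicate p X @ take k (Y # r)) * SO (drop k (Y # r)))"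
    using split_sum[of "\<lambda>a b. U a * SO b" "replicate p X" "Y # r"] by simp
  have 2: "(\<Sum>k\<in>{1..Suc (length r)}. U (replicate p X @ take k (Y # r)) * SO (drop k (Y # r)))
      = (\<Sum>j\<in>{0..length r}. U (replicate p X @ Y # take j r) * SO (drop j r))"
    using sum.shift_bounds_cl_Suc_ivl[of "\<lambda>k. U (replicate p X @ take k (Y # r)) * SO (drop k (Y # r))" 0 "length r"]
    by simp
  have 3: "(\<Sum>j\<in>{0..length r}. U (replicate p X @ Y # take j r) * SO (drop j r))
     = (\<Sum>j\<in>{0..m}. U (replicate p X @ Y # take j (replicate m X)) * SO (drop j (replicate m X) @ r'))
       + (\<Sum>k\<in>{1..length r'}. U (replicate p X @ Y # replicate m X @ take k r') * SO (drop k r'))"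
    unfolding r_def
    using split_sum0[of "\<lambda>a b. U (replicate p X @ Y # a) * SO b" "replicate m X" r'] by simp
  have 4: "(\<Sum>k\<in>{1..length r'}. U (replicate p X @ Y # replicate m X @ take k r') * SO (drop k r')) = 0"
  proof (rule sum.neutral, rule ballI)
    fix k assume k: "k \<in> {1..length r'}"
    then obtain s where s: "r' = Y # s" using r' by auto
    have "take k r' = Y # take (k - 1) s" using k s by (cases k) auto
    then show "U (replicate p X @ Y # replicate m X @ take k r') * SO (drop k r') = 0"
      by (simp add: U3)
  qed
  have 5: "(\<Sum>j\<in>{0..m}. U (replicate p X @ Y # take j (replicate m X)) * SO (drop j (replicate m X) @ r'))
     = (\<Sum>j\<in>{0..m}. (-1) ^ j / (fact p * fact j) * SO (replicate (m - j) X @ r'))"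
    by (rule sum.cong) (auto simp: U2 min_def)
  show ?thesis
    unfolding r_def[symmetric]
    by (simp only: 1 2 3 4 5 first_part)
qed




lemma R_A:
  assumes p: "p > 0"
  shows "(\<Sum>k\<in>{1..length (replicate p X)}. U (take k (replicate p X)) * SO (drop k (replicate p X)))
        = of_nat p * SO (replicate p X)"
proof -
  have "(\<Sum>k\<in>{1..length (replicate p X)}. U (take k (replicate p X)) * SO (drop k (replicate p X)))
      = (\<Sum>k\<in>{1..p}. U (take k (replicate p X)) * SO (drop k (replicate p X) @ []))"
    by simp
  also have "\<dots> = SO (replicate (p - 1) X @ [])"
    using first_part[of p "[]"] p by simp
  also have "\<dots> = 1 / fact (p - 1)"
    using SO_form[of "p - 1" 0] by simp
  also have "\<dots> = of_nat p * (1 / fact p)"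
    using p by (simp add: fact_reduce[of p])
  also have "1 / fact p = SO (replicate p X)"
    using SO_form[of p 0] by simp
  finally show ?thesis .
qed



lemma alg1:
  fixes a b p c :: rat
  assumes "a > 0" "b > 0" "p > 0" "c \<ge> 0"
  shows "1 / (a * ((c + 1) * b)) + 1 / (p * a) * (1 / b) = (p + (c + 1)) * (1 / ((p * a) * ((c + 1) * b)))"
proof -
  have "c + 1 > 0" using assms by simp
  hence ne: "a \<noteq> 0" "b \<noteq> 0" "p \<noteq> 0" "c + 1 \<noteq> 0" using assms by auto
  have e1: "1 / (a * ((c + 1) * b)) = p / (p * a * ((c + 1) * b))" using ne by simp
  have e2: "1 / (p * a) * (1 / b) = (c + 1) / (p * a * ((c + 1) * b))" using ne by simp
  have "1 / (a * ((c + 1) * b)) + 1 / (p * a) * (1 / b) = p / (p * a * ((c + 1) * b)) + (c + 1) / (p * a * ((c + 1) * b))"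
    by (simp only: e1 e2)
  also have "\<dots> = (p + (c + 1)) / (p * a * ((c + 1) * b))" by (rule add_divide_distrib[symmetric])
  also have "\<dots> = (p + (c + 1)) * (1 / ((p * a) * ((c + 1) * b)))" by simp
  finally show ?thesis .
qed


lemma R_B1:
  "(\<Sum>k\<in>{1..length (replicate p X @ Y # replicate 0 X @ replicate n Y)}.
      U (take k (replicate p X @ Y # replicate 0 X @ replicate n Y)) * SO (drop k (replicate p X @ Y # replicate 0 X @ replicate n Y)))
   = of_nat (length (replicate p X @ Y # replicate 0 X @ replicate n Y)) * SO (replicate p X @ Y # replicate 0 X @ replicate n Y)"
proof -
  have r': "replicate n Y = [] \<or> (\<exists>s. replicate n Y = Y # s)" by (cases n) auto
  note L = L_form[OF r', where p=p and m=0]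
  have S: "(\<Sum>j\<in>{0..0::nat}. (-1) ^ j / (fact p * fact j) * SO (replicate (0 - j) X @ replicate n Y)) = 1 / fact p * (1 / fact n)"
    using SO_form[of 0 n] by simp
  have e: "replicate p X @ Y # replicate 0 X @ replicate n Y = replicate p X @ replicate (Suc n) Y" by simp
  have SW: "SO (replicate p X @ Y # replicate 0 X @ replicate n Y) = 1 / (fact p * fact (Suc n))"
    unfolding e by (rule SO_form)
  have len: "length (replicate p X @ Y # replicate 0 X @ replicate n Y) = p + Suc n" by simp
  show ?thesis
  proof (cases "p = 0")
    case True
    have fn: "(fact (Suc n) :: rat) = of_nat (Suc n) * fact n" by simp
    have pos: "(fact n :: rat) > 0" by auto
    have nz: "(fact n :: rat) + fact n * of_nat n \<noteq> 0"
    proof -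
      have "(fact n :: rat) + fact n * of_nat n = fact n * (1 + of_nat n)" by (simp add: algebra_simps)
      moreover have "(fact n :: rat) * (1 + of_nat n) > 0" using pos by (intro mult_pos_pos) auto
      ultimately show ?thesis by simp
    qed
    show ?thesis unfolding L unfolding S SW len fn using True pos nz by (simp add: field_simps)
  next
    case False
    have f1: "SO (replicate (p - 1) X @ Y # replicate 0 X @ replicate n Y) = 1 / (fact (p - 1) * fact (Suc n))"
      using SO_form[of "p - 1" "Suc n"] by simp
    have fp: "(fact p :: rat) = of_nat p * fact (p - 1)" using False by (simp add: fact_reduce[of p])
    have fn: "(fact (Suc n) :: rat) = of_nat (Suc n) * fact n" by simp
    have pos: "(fact (p - 1) :: rat) > 0" "(fact n :: rat) > 0" by auto
    have "(\<Sum>k\<in>{1..length (replicate p X @ Y # replicate 0 X @ replicate n Y)}.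
      U (take k (replicate p X @ Y # replicate 0 X @ replicate n Y)) * SO (drop k (replicate p X @ Y # replicate 0 X @ replicate n Y)))
      = 1 / (fact (p - 1) * fact (Suc n)) + 1 / fact p * (1 / fact n)"
      unfolding L using False by (simp only: f1 S if_False)
    also have "\<dots> = of_nat (p + Suc n) * (1 / (fact p * fact (Suc n)))"
      unfolding fp fn using alg1[of "fact (p - 1)" "fact n" "of_nat p" "of_nat n"] False pos
      by (simp add: add.commute)
    finally show ?thesis unfolding SW len .
  qed
qed



lemma alt_sum: "m > 0 \<Longrightarrow> (\<Sum>j\<in>{0..m}. (-1) ^ j / (fact j * fact (m - j)) :: rat) = 0"
proof -
  assume m: "m > 0"
  have "(\<Sum>j\<in>{0..m}. (-1) ^ j / (fact j * fact (m - j)) :: rat) =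
        (\<Sum>j\<le>m. (-1) ^ j * of_nat (m choose j)) / fact m"
    by (auto simp: atLeast0AtMost sum_divide_distrib binomial_fact field_simps intro!: sum.cong)
  also have "\<dots> = 0" using choose_alternating_sum[OF m] by simp
  finally show ?thesis .
qed

lemma R_B2:
  assumes m: "m > 0"
  shows "(\<Sum>k\<in>{1..length (replicate p X @ Y # replicate m X @ replicate n Y)}.
      U (take k (replicate p X @ Y # replicate m X @ replicate n Y)) * SO (drop k (replicate p X @ Y # replicate m X @ replicate n Y)))
   = of_nat (length (replicate p X @ Y # replicate m X @ replicate n Y)) * SO (replicate p X @ Y # replicate m X @ replicate n Y)"
proof -
  have r': "replicate n Y = [] \<or> (\<exists>s. replicate n Y = Y # s)" by (cases n) auto
  note L = L_form[OF r', where p=p and m=m]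
  have Xin: "X \<in> set (replicate m X @ replicate n Y)" using m by simp
  have z1: "SO (replicate (p - 1) X @ Y # replicate m X @ replicate n Y) = 0"
    by (rule SO_zero[OF Xin])
  have zw: "SO (replicate p X @ Y # replicate m X @ replicate n Y) = 0"
    by (rule SO_zero[OF Xin])
  have "(\<Sum>j\<in>{0..m}. (-1) ^ j / (fact p * fact j) * SO (replicate (m - j) X @ replicate n Y))
      = (\<Sum>j\<in>{0..m}. (-1) ^ j / (fact j * fact (m - j))) / (fact p * fact n)"
    unfolding sum_divide_distrib
  proof (rule sum.cong[OF refl])
    fix j assume "j \<in> {0..m}"
    show "(-1) ^ j / (fact p * fact j) * SO (replicate (m - j) X @ replicate n Y) =
        (-1) ^ j / (fact j * fact (m - j)) / (fact p * fact n)"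
      by (simp only: SO_form) (simp add: field_simps)
  qed
  also have "\<dots> = 0" using alt_sum[OF m] by simp
  finally have S: "(\<Sum>j\<in>{0..m}. (-1) ^ j / (fact p * fact j) * SO (replicate (m - j) X @ replicate n Y)) = 0" .
  show ?thesis unfolding L unfolding S z1 zw by simp
qed

lemma R_B3:
  assumes s': "X \<in> set s'"
  shows "(\<Sum>k\<in>{1..length (replicate p X @ Y # replicate m X @ Y # s')}.
      U (take k (replicate p X @ Y # replicate m X @ Y # s')) * SO (drop k (replicate p X @ Y # replicate m X @ Y # s')))
   = of_nat (length (replicate p X @ Y # replicate m X @ Y # s')) * SO (replicate p X @ Y # replicate m X @ Y # s')"
proof -
  have r': "Y # s' = [] \<or> (\<exists>s. Y # s' = Y # s)" by auto
  note L = L_form[OF r', where p=p and m=m]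
  have Xin: "X \<in> set (replicate m X @ Y # s')" using s' by simp
  have z1: "SO (replicate (p - 1) X @ Y # replicate m X @ Y # s') = 0"
    by (rule SO_zero[OF Xin])
  have zw: "SO (replicate p X @ Y # replicate m X @ Y # s') = 0"
    by (rule SO_zero[OF Xin])
  have S: "(\<Sum>j\<in>{0..m}. (-1) ^ j / (fact p * fact j) * SO (replicate (m - j) X @ Y # s')) = 0"
    by (simp only: SO_zero[OF s']) simp
  show ?thesis unfolding L unfolding S z1 zw by simp
qed

lemma xsplit: "\<exists>p r. w = replicate p X @ r \<and> (r = [] \<or> (\<exists>s. r = Y # s))"
proof (induction w)
  case Nil then show ?case by auto
next
  case (Cons c w)
  show ?case
  proof (cases c)
    case X
    from Cons obtain p r where "w = replicate p X @ r \<and> (r = [] \<or> (\<exists>s. r = Y # s))" by blast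
    then show ?thesis using X by (intro exI[of _ "Suc p"] exI[of _ r]) auto
  next
    case Y
    then show ?thesis by (intro exI[of _ 0] exI[of _ "c # w"]) auto
  qed
qed

lemma R:
  assumes "w \<noteq> []"
  shows "(\<Sum>k\<in>{1..length w}. U (take k w) * SO (drop k w)) = of_nat (length w) * SO w"
proof -
  obtain p r where w: "w = replicate p X @ r" and r: "r = [] \<or> (\<exists>s. r = Y # s)"
    using xsplit by blast
  show ?thesis
  proof (cases "r = []")
    case True
    then have wp: "w = replicate p X" using w by simp
    then have p: "p > 0" using assms by (cases p) auto
    show ?thesis unfolding wp using R_A[OF p] by (simp only: length_replicate)
  next
    case False
    then obtain s where s: "r = Y # s" using r by auto
    obtain m r' where sm: "s = replicate m X @ r'" and r': "r' = [] \<or> (\<exists>s. r' = Y # s)"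
      using xsplit by blast
    have w2: "w = replicate p X @ Y # replicate m X @ r'" using w s sm by simp
    show ?thesis
    proof (cases "set r' \<subseteq> {Y}")
      case True
      have "r' = replicate (length r') Y" using True by (simp only: rep_iff)
      then obtain n where rn: "r' = replicate n Y" by blast
      show ?thesis
      proof (cases "m = 0")
        case True
        show ?thesis unfolding w2 rn True by (rule R_B1)
      next
        case False
        then have "m > 0" by simp
        show ?thesis unfolding w2 rn by (rule R_B2[OF \<open>m > 0\<close>])
      qed
    next
      case False
      then obtain c where c: "c \<in> set r'" "c \<noteq> Y" by blast
      have "c = X" using c(2) by (cases c) auto
      with c have "X \<in> set r'" by simp
      then obtain s' where s': "r' = Y # s'" "X \<in> set s'" using r' by auto
      show ?thesis unfolding w2 s'(1) by (rule R_B3[OF s'(2)])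
    qed
  qed
qed

lemma part1: "G S_N U w = S_Omega w"
proof (induction w rule: length_induct)
  case (1 w)
  show ?case
  proof (cases "w = []")
    case True
    then show ?thesis
      by (simp add: G_def D_Nil S_N_def S_Omega_def mmult_def mexp_def mone_def)
  next
    case False
    have "of_nat (length w) * G S_N U w = (\<Sum>k\<in>{1..length w}. U (take k w) * G S_N U (drop k w))"
      by (rule G_SN_rec[OF False])
    also have "\<dots> = (\<Sum>k\<in>{1..length w}. U (take k w) * SO (drop k w))"
      using 1 False by (intro sum.cong refl) auto
    also have "\<dots> = of_nat (length w) * SO w" by (rule R[OF False])
    finally show ?thesis using False by simp
  qed
qed

theorem theorem5p2:
  shows "odot S_N U = S_Omega \<and> odot T_N U = T_Omega"
proof
  have gs: "G S_N U = S_Omega" by (rule ext, rule part1)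
  show "odot S_N U = S_Omega" by (simp add: odot_G gs)
  have S1: "S_N [] = 1" by (simp add: S_N_def)
  show "odot T_N U = T_Omega"
  proof (rule ext)
    fix x
    show "odot T_N U x = T_Omega x"
      unfolding odot_G T_N_def T_Omega_def using G_mlog[where M=S_N, OF S1, of U x] gs by simp
  qed
qed

end
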